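(* Let $U\in\mathcal{P}(n,d)$ and $L^{tr}=\mathbf{e}^d\mathbf{n}^{n-d}$. Set $\mathcal{S}=\{\mathrm{st}(C):C\in\mathcal{P}[U,L^{tr}]\}$, $\mathcal{S}^{\mathbf{e}}=\{\mathrm{st}(C):C\in\mathcal{P}[U,L^{tr}]^{\mathbf{e}}_\circ\}$, $\mathcal{S}^{\mathbf{n}}=\{\mathrm{st}(C):C\in\mathcal{P}[U,L^{tr}]^{\mathbf{n}}_\circ\}$. Then \[ \mathcal{S}=\mathcal{S}^{\mathbf{e}}\cup\mathcal{S}^{\mathbf{n}}\cup\big(n\ast(\mathcal{S}^{\mathbf{e}}\cap\mathcal{S}^{\mathbf{n}})\big). \]
   Context: $\mathcal{P}(n,d)$ is the set of words $C=C_1\cdots C_n$ in letters $\mathbf{e}$ (east) and $\mathbf{n}$ (north) with exactly $d$ letters $\mathbf{e}$. $U$ is weakly above $L$ if every prefix $L_1\cdots L_k$ has at least as many $\mathbf{e}$'s as $U_1\cdots U_k$; $\mathcal{P}[U,L^{tr}]$ is the set of $C\in\mathcal{P}(n,d)$ weakly below $U$ (and weakly above $L^{tr}$, which always holds). $\mathcal{P}[U,L^{tr}]^{\mathbf{e}}_\circ$ (resp. $\mathcal{P}[U,L^{tr}]^{\mathbf{n}}_\circ$) is the set of words $C_1\cdots C_{n-1}$ obtained from $C\in\mathcal{P}[U,L^{tr}]$ with $C_n=\mathbf{e}$ (resp. $C_n=\mathbf{n}$) by deleting the last letter. For any word $C$ in $\mathbf{e},\mathbf{n}$: scan positions left to right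 and mark position $i$ with $C_i=\mathbf{e}$ if the number of $j<i$ with $C_j=\mathbf{n}$ equals the number of $j<i$ with $C_j=\mathbf{e}$ that are unmarked; $\mathrm{st}(C)$ is the set of unmarked positions $i$ with $C_i=\mathbf{e}$. For a collection $K$ of subsets of $[n-1]$, $n\ast K=K\cup\{\sigma\cup\{n\}:\sigma\in K\}$. *)

theory Defs
  imports Main
begin

datatype letter = E | N   (* E = east (e), N = north (n) *)

definition cnt_e :: "letter list \<Rightarrow> nat" where
  "cnt_e w = length (filter (\<lambda>x. x = E) w)"

definition Pnd :: "nat \<Rightarrow> nat \<Rightarrow> letter list set" where
  "Pnd n d = {C. length C = n \<and> cnt_e C = d}"

definition weakly_above :: "letter list \<Rightarrow> letter list \<Rightarrow> bool" where
  "weakly_above U L \<longleftrightarrow> (\<forall>k \<le> length L. cnt_e (take k U) \<le> cnt_e (take k L))"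

definition Pint :: "nat \<Rightarrow> nat \<Rightarrow> letter list \<Rightarrow> letter list \<Rightarrow> letter list set" where
  "Pint n d U L = {C \<in> Pnd n d. weakly_above U C \<and> weakly_above C L}"

definition Pint_circ :: "letter \<Rightarrow> nat \<Rightarrow> nat \<Rightarrow> letter list \<Rightarrow> letter list \<Rightarrow> letter list set" where
  "Pint_circ x n d U L = {butlast C | C. C \<in> Pint n d U L \<and> last C = x}"

text \<open>Marking procedure. Arguments: current (1-based) position, number of n's so far,
  number of unmarked e's so far. Returns the set of unmarked e-positions.\<close>
fun st_aux :: "letter list \<Rightarrow> nat \<Rightarrow> nat \<Rightarrow> nat \<Rightarrow> nat set" where
  "st_aux [] i a b = {}"
| "st_aux (N # w) i a b = st_aux w (Suc i) (Suc a) b"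
| "st_aux (E # w) i a b =
     (if a = b then st_aux w (Suc i) a b else insert i (st_aux w (Suc i) a (Suc b)))"

definition st :: "letter list \<Rightarrow> nat set" where
  "st C = st_aux C 1 0 0"

definition star :: "nat \<Rightarrow> nat set set \<Rightarrow> nat set set" where
  "star n K = K \<union> {\<sigma> \<union> {n} | \<sigma>. \<sigma> \<in> K}"

end

theory Submission
  imports Defs
begin

fun sth :: "letter list \<Rightarrow> nat \<Rightarrow> nat \<Rightarrow> nat set" where
  "sth [] i h = {}"
| "sth (N # w) i h = sth w (Suc i) (Suc h)"
| "sth (E # w) i h = (if h = 0 then sth w (Suc i) 0 else insert i (sth w (Suc i) (h - 1)))"

fun hl :: "letter list \<Rightarrow> nat \<Rightarrow> nat" where
  "hl [] h = h"
| "hl (N # w) h = hl w (Suc h)"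
| "hl (E # w) h = hl w (h - 1)"

lemma st_aux_sth: "b \<le> a \<Longrightarrow> st_aux w i a b = sth w i (a - b)"
proof (induction w arbitrary: i a b)
  case Nil then show ?case by simp
next
  case (Cons x w) then show ?case
    by (cases x) (auto simp: Suc_diff_le)
qed

lemma st_sth: "st C = sth C 1 0"
  unfolding st_def using st_aux_sth[of 0 0] by simp

lemma cnt_e_simps[simp]: "cnt_e [] = 0" "cnt_e (x # xs) = (if x = E then 1 else 0) + cnt_e xs"
  "cnt_e (xs @ ys) = cnt_e xs + cnt_e ys"
  by (auto simp: cnt_e_def)

lemma cnt_e_le_length: "cnt_e w \<le> length w"
  by (simp add: cnt_e_def)

lemma cnt_e_take_le: "cnt_e (take k w) \<le> cnt_e w"
  by (induction w arbitrary: k) (auto simp: take_Cons split: nat.splits)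

lemma hl_append: "hl (u @ v) h = hl v (hl u h)"
  by (induction u h rule: hl.induct) auto

lemma sth_append: "sth (u @ v) i h = sth u i h \<union> sth v (i + length u) (hl u h)"
  by (induction u i h rule: sth.induct) auto

lemma sth_ge: "x \<in> sth w i h \<Longrightarrow> i \<le> x"
  by (induction w i h rule: sth.induct) (auto split: if_splits; fastforce)+

lemma sth_finite: "finite (sth w i h)"
  by (induction w i h rule: sth.induct) auto

lemma sth_card: "card (sth w i h) + hl w h + cnt_e w = h + length w"
proof (induction w i h rule: sth.induct)
  case (3 w i h)
  have "i \<notin> sth w (Suc i) (h - 1)" using sth_ge by fastforce
  then show ?case using 3 sth_finite by auto
qed auto

lemma sth_shift: "hl v (Suc h) = Suc (hl v h) \<Longrightarrow> sth v i (Suc h) = sth v i h"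
proof (induction v arbitrary: i h)
  case Nil then show ?case by simp
next
  case (Cons x v) then show ?case
  proof (cases x)
    case E
    show ?thesis
    proof (cases h)
      case 0 then show ?thesis using Cons E by simp
    next
      case (Suc h') then show ?thesis using Cons E by simp
    qed
  qed simp
qed

lemma hl_snoc: "hl (w @ [x]) h = (if x = N then Suc (hl w h) else hl w h - 1)"
  by (cases x) (auto simp: hl_append)

lemma decomp: "0 < hl w 0 \<Longrightarrow> \<exists>u v. w = u @ N # v \<and> hl u 0 = 0 \<and> hl v 1 = Suc (hl v 0)"
proof (induction w rule: rev_induct)
  case Nil then show ?case by simp
next
  case (snoc x w0)
  show ?case
  proof (cases x)
    case N
    show ?thesis
    proof (cases "hl w0 0 = 0")
      case True then show ?thesis using N by (intro exI[of _ w0] exI[of _ "[]"]) simp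
    next
      case False
      then obtain u v0 where "w0 = u @ N # v0" "hl u 0 = 0" "hl v0 1 = Suc (hl v0 0)"
        using snoc by auto
      then show ?thesis using N
        by (intro exI[of _ u] exI[of _ "v0 @ [N]"]) (simp add: hl_snoc)
    qed
  next
    case E
    then have g: "hl w0 0 > 1" using snoc.prems by (simp add: hl_snoc)
    then obtain u v0 where uv: "w0 = u @ N # v0" "hl u 0 = 0" "hl v0 1 = Suc (hl v0 0)"
      using snoc by auto
    have "hl w0 0 = hl v0 1" using uv by (simp add: hl_append)
    then have "hl v0 0 > 0" using g uv by simp
    then show ?thesis using E uv
      by (intro exI[of _ u] exI[of _ "v0 @ [E]"]) (simp add: hl_snoc)
  qed
qed

lemma flip_sth:
  assumes "w = u @ N # v" "hl u 0 = 0" "hl v 1 = Suc (hl v 0)"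
  shows "sth (u @ E # v) i 0 = sth w i 0"
  using assms sth_shift[of v 0] by (simp add: sth_append)

lemma sth_snoc: "sth (w @ [x]) i h = sth w i h \<union> (if x = E \<and> hl w h \<noteq> 0 then {i + length w} else {})"
  by (cases x) (auto simp: sth_append)

lemma take_flip: "cnt_e (take k (u @ N # v @ [E])) \<le> cnt_e (take k (u @ E # v @ [N]))"
proof (cases "k \<le> length u")
  case True then show ?thesis by simp
next
  case False
  then obtain j where k: "k = length u + Suc j" by (metis add_Suc_right less_imp_Suc_add not_le)
  have "cnt_e (take j (v @ [E])) \<le> Suc (cnt_e (take j (v @ [N])))"
    by (cases "j \<le> length v") (auto simp: take_append)
  then show ?thesis using k by (simp add: take_append)
qed

definition inP :: "nat \<Rightarrow> nat \<Rightarrow> letter list \<Rightarrow> letter list \<Rightarrow> bool" where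
  "inP n d U C \<longleftrightarrow> length C = n \<and> cnt_e C = d \<and> (\<forall>k \<le> n. cnt_e (take k U) \<le> cnt_e (take k C))"

lemma Pint_iff:
  "C \<in> Pint n d U (replicate d E @ replicate (n - d) N) \<longleftrightarrow> inP n d U C"
proof -
  have "weakly_above C (replicate d E @ replicate (n - d) N)" if "length C = n" "cnt_e C = d"
  proof -
    have "cnt_e (take k C) \<le> cnt_e (take k (replicate d E @ replicate (n - d) N))" for k
    proof -
      have a: "cnt_e (take k C) \<le> k" using cnt_e_le_length[of "take k C"] by simp
      have b: "cnt_e (take k C) \<le> d" using cnt_e_take_le[of k C] that by simp
      have "cnt_e (take k (replicate d E @ replicate (n - d) N)) = min k d"
        by (simp add: take_append cnt_e_def min_def)
      then show ?thesis using a b by simp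
    qed
    then show ?thesis unfolding weakly_above_def by blast
  qed
  then show ?thesis unfolding Pint_def Pnd_def inP_def weakly_above_def by auto
qed

lemma circ_iff:
  assumes "n \<ge> 1"
  shows "X \<in> Pint_circ x n d U (replicate d E @ replicate (n - d) N) \<longleftrightarrow> inP n d U (X @ [x])"
proof
  assume "X \<in> Pint_circ x n d U (replicate d E @ replicate (n - d) N)"
  then obtain C where C: "X = butlast C" "inP n d U C" "last C = x"
    unfolding Pint_circ_def Pint_iff by auto
  then have "C \<noteq> []" using assms unfolding inP_def by auto
  then have "C = X @ [x]" using C by (metis append_butlast_last_id)
  then show "inP n d U (X @ [x])" using C by simp
next
  assume "inP n d U (X @ [x])"
  then show "X \<in> Pint_circ x n d U (replicate d E @ replicate (n - d) N)"
    unfolding Pint_circ_def Pint_iff by (intro CollectI exI[of _ "X @ [x]"]) simp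
qed

lemma flipP:
  assumes "inP n d U (C @ [E])" "hl C 0 > 0"
  shows "\<exists>D. inP n d U (D @ [N]) \<and> sth D 1 0 = sth C 1 0"
proof -
  obtain u v where uv: "C = u @ N # v" "hl u 0 = 0" "hl v 1 = Suc (hl v 0)"
    using decomp assms(2) by blast
  have "inP n d U (u @ E # v @ [N])"
    using assms(1) uv take_flip[of _ u v] unfolding inP_def
    by (auto intro: order_trans)
  moreover have "sth (u @ E # v) 1 0 = sth C 1 0" using flip_sth uv by blast
  ultimately show ?thesis by (intro exI[of _ "u @ E # v"]) simp
qed

theorem theorem4p11:
  fixes n d :: nat and U :: "letter list"
  assumes "n \<ge> 1" and "U \<in> Pnd n d"
  defines "Ltr \<equiv> replicate d E @ replicate (n - d) N"
  shows "st ` Pint n d U Ltr =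
           st ` Pint_circ E n d U Ltr \<union> st ` Pint_circ N n d U Ltr
           \<union> star n (st ` Pint_circ E n d U Ltr \<inter> st ` Pint_circ N n d U Ltr)"
proof -
  have S: "st ` Pint n d U Ltr = {sth C 1 0 | C. inP n d U C}"
    unfolding st_sth image_def using Pint_iff[of _ n d U] unfolding Ltr_def by blast
  have SX: "st ` Pint_circ x n d U Ltr = {sth C 1 0 | C. inP n d U (C @ [x])}" for x
  proof -
    have "\<And>X. X \<in> Pint_circ x n d U Ltr \<longleftrightarrow> inP n d U (X @ [x])"
      unfolding Ltr_def by (rule circ_iff[OF assms(1)])
    then show ?thesis unfolding st_sth by auto
  qed
  have len: "length C = n - 1" if "inP n d U (C @ [x])" for C x
    using that unfolding inP_def by auto
  define A where "A = {sth C 1 0 | C. inP n d U (C @ [E])}"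
  define B where "B = {sth C 1 0 | C. inP n d U (C @ [N])}"
  define P where "P = {sth C 1 0 | C. inP n d U C}"
  have AE: "sth C 1 0 \<in> P" if hC: "inP n d U (C @ [E])" for C
  proof (cases "hl C 0 = 0")
    case True then show ?thesis using hC unfolding P_def
      by (intro CollectI exI[of _ "C @ [E]"]) (simp add: sth_snoc)
  next
    case False
    then obtain D where D: "inP n d U (D @ [N])" "sth D 1 0 = sth C 1 0"
      using flipP[of n d U C] hC by auto
    then show ?thesis unfolding P_def
      by (intro CollectI exI[of _ "D @ [N]"]) (simp add: sth_snoc)
  qed
  have AN: "sth C 1 0 \<in> P" if "inP n d U (C @ [N])" for C
    using that unfolding P_def by (intro CollectI exI[of _ "C @ [N]"]) (simp add: sth_snoc)
  have BB: "sth C 1 0 \<union> {n} \<in> P"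
    if hh: "inP n d U (C @ [E])" "inP n d U (D @ [N])" "sth C 1 0 = sth D 1 0" for C D
  proof (cases "hl C 0 = 0")
    case True
    have c1: "card (sth C 1 0) + cnt_e C = length C" using sth_card[of C 1 0] True by simp
    have c2: "card (sth C 1 0) + hl D 0 + cnt_e D = length D" using sth_card[of D 1 0] hh by simp
    from hh have "length C = length D" "cnt_e D = Suc (cnt_e C)" unfolding inP_def by auto
    then show ?thesis using c1 c2 by simp
  next
    case False
    have "1 + length C = n" using len hh assms(1) by fastforce
    then show ?thesis using hh False unfolding P_def
      by (intro CollectI exI[of _ "C @ [E]"]) (simp add: sth_snoc)
  qed
  have "P = A \<union> B \<union> (A \<inter> B \<union> {\<sigma> \<union> {n} | \<sigma>. \<sigma> \<in> A \<inter> B})"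
  proof (intro equalityI subsetI)
    fix s assume "s \<in> P"
    then obtain C where C: "s = sth C 1 0" "inP n d U C" unfolding P_def by auto
    then have "C \<noteq> []" using assms(1) unfolding inP_def by auto
    then obtain C' x where C': "C = C' @ [x]" by (metis append_butlast_last_id)
    have l: "1 + length C' = n" using len C C' assms(1) by fastforce
    show "s \<in> A \<union> B \<union> (A \<inter> B \<union> {\<sigma> \<union> {n} | \<sigma>. \<sigma> \<in> A \<inter> B})"
    proof (cases "x = E \<and> hl C' 0 \<noteq> 0")
      case True
      then obtain D where D: "inP n d U (D @ [N])" "sth D 1 0 = sth C' 1 0"
        using flipP[of n d U C'] C C' by auto
      have s: "s = sth C' 1 0 \<union> {n}" using C C' True l by (simp add: sth_snoc)
      have "sth C' 1 0 \<in> A" using C C' True unfolding A_def by auto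
      moreover have "sth C' 1 0 \<in> B" using D unfolding B_def by (metis (mono_tags, lifting) CollectI)
      ultimately have "s \<in> {\<sigma> \<union> {n} | \<sigma>. \<sigma> \<in> A \<inter> B}" using s by blast
      then show ?thesis by blast
    next
      case False
      then have "s = sth C' 1 0" using C C' by (auto simp: sth_snoc)
      then have "s \<in> A \<or> s \<in> B" using C C' unfolding A_def B_def by (cases x) auto
      then show ?thesis by blast
    qed
  next
    fix s assume s: "s \<in> A \<union> B \<union> (A \<inter> B \<union> {\<sigma> \<union> {n} | \<sigma>. \<sigma> \<in> A \<inter> B})"
    have "A \<subseteq> P" using AE unfolding A_def by blast
    moreover have "B \<subseteq> P" using AN unfolding B_def by blast
    moreover have "\<sigma> \<union> {n} \<in> P" if sAB: "\<sigma> \<in> A" "\<sigma> \<in> B" for \<sigma>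
    proof -
      obtain C where "inP n d U (C @ [E])" "\<sigma> = sth C 1 0" using sAB(1) unfolding A_def by blast
      moreover obtain D where "inP n d U (D @ [N])" "\<sigma> = sth D 1 0" using sAB(2) unfolding B_def by blast
      ultimately show ?thesis using BB by metis
    qed
    ultimately show "s \<in> P" using s by blast
  qed
  then show ?thesis unfolding S SX star_def A_def B_def P_def .
qed

end
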